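(* Let $n\equiv 0\pmod 3$. If there exist a ${}^{1}\mathrm{cDCQS}(g^n:2)$ and an $\mathrm{RDSQS}(g+2)$, then there exists an $\mathrm{mcDSQS}(gn+2)$.
   Context: A Steiner triple system $\mathrm{STS}(v)$: a $v$-set with $3$-subsets (blocks) such that each pair lies in exactly one block. A partial parallel class (PPC) of a set $Y$ is a set of pairwise disjoint blocks contained in $Y$; a parallel class (PC) of $Y$ is a PPC whose union is $Y$; a design is resolvable if its blocks partition into PCs of its point set. $\chi'(v)$ is the minimum over all $\mathrm{STS}(v)$ of the least number of PPCs into which its block set can be partitioned; an $\mathrm{STS}(v)$ admitting a partition into $\chi'(v)$ PPCs is an $\mathrm{mcSTS}(v)$. An $\mathrm{SQS}(v)$ is a $v$-set $X$ with $4$-subsets such that each $3$-subset lies in exactly one block; its derived design at $x$ is $\{B\setminus\{x\}:x\in B\}$ on $X\setminus\{x\}$. An $\mathrm{mcDSQS}(v)$ is an $\mathrm{SQS}(v)$ all of whose derived designs are $\mathrm{mcSTS}(v-1)$; an $\mathrm{RDSQS}(v)$ is an $\mathrm{SQS}(v)$ all of whose derived designs are resolvable. An incomplete $\mathrm{STS}(v,h)$ is $(Y,H,\mathcal{B})$, $|Y|=v$, $|H|=h$, each pair of $Y$ not inside $H$ in exactly one block and no pair inside $H$ in a block; it is a $\mathrm{gcSTS}(v,h)$ if $\mathcal{B}$ partitions into $\chi'(v)$ PPCs of $Y$ of which $\chi'(v)-\frac{v-h}{2}$ are PPCs of $Y\setminus H$. A $\mathrm{GDD}(2,3,gn)$ of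 type $g^n$ is $(Z,\mathcal{G},\mathcal{B})$, $\mathcal{G}$ a partition of $Z$ into $n$ groups of size $g$, $\mathcal{B}$ triples meeting each group in at most one point with each pair from distinct groups in exactly one block. For $g$ even, it is good colorable ($\mathrm{gcGDD}$) if $\mathcal{B}=\big(\bigcup_{G\in\mathcal{G},1\le i\le g/2}P_G^i\big)\cup P_H^*$ (a partition) where each $P_G^i$ is a PPC of $Z\setminus G$ and $P_H^*$ is a PPC of $Z\setminus H$ for some $H\in\mathcal{G}$, the special group. A $\mathrm{CQS}(g^n:s)$ is $(X,S,\mathcal{G},\mathcal{A})$ with $|S|=s$, $\mathcal{G}$ a partition of $X\setminus S$ into $n$ groups of size $g$, $\mathcal{A}$ a set of $4$-subsets such that every $3$-subset not contained in any $S\cup G$ lies in exactly one block and none contained in some $S\cup G$ lies in a block. With $\mathcal{A}_x=\{A\setminus\{x\}:x\in A\in\mathcal{A}\}$, a ${}^{1}\mathrm{cDCQS}(g^n:2)$ (for $g$ even) is a $\mathrm{CQS}(g^n:2)$ such that for each $x\in G\in\mathcal{G}$, $(X\setminus\{x\},(G\cup S)\setminus\{x\},\mathcal{A}_x)$ is a $\mathrm{gcSTS}(gn+1,g+1)$, and for each $x\in S$, $(X\setminus S,\mathcal{G},\mathcal{A}_x)$ is a $\mathrm{gcGDD}(2,3,gn)$ of type $g^n$, with the same special group for both points of $S$. *)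

theory Defs
  imports Main
begin

definition is_STS :: "'a set \<Rightarrow> 'a set set \<Rightarrow> bool" where
  "is_STS X B \<longleftrightarrow> finite X \<and> (\<forall>b\<in>B. b \<subseteq> X \<and> card b = 3) \<and>
     (\<forall>x\<in>X. \<forall>y\<in>X. x \<noteq> y \<longrightarrow> (\<exists>!b. b \<in> B \<and> {x, y} \<subseteq> b))"

definition is_PPC :: "'a set \<Rightarrow> 'a set set \<Rightarrow> bool" where
  "is_PPC Y P \<longleftrightarrow> (\<forall>b\<in>P. b \<subseteq> Y) \<and> pairwise disjnt P"

definition is_PC :: "'a set \<Rightarrow> 'a set set \<Rightarrow> bool" where
  "is_PC Y P \<longleftrightarrow> is_PPC Y P \<and> \<Union>P = Y"

definition PPC_partition :: "'a set \<Rightarrow> 'a set set \<Rightarrow> nat \<Rightarrow> bool" where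
  "PPC_partition Y B k \<longleftrightarrow>
     (\<exists>f :: 'a set \<Rightarrow> nat. (\<forall>b\<in>B. f b < k) \<and> (\<forall>i<k. is_PPC Y {b\<in>B. f b = i}))"

definition resolvable :: "'a set \<Rightarrow> 'a set set \<Rightarrow> bool" where
  "resolvable X B \<longleftrightarrow> (\<exists>R. (\<forall>P\<in>R. is_PC X P) \<and> \<Union>R = B \<and> pairwise disjnt R)"

text \<open>chi'(v): minimum over all STS(v) of the least number of PPCs partitioning the blocks.
  (Designs are taken on point sets of naturals; all notions are isomorphism invariant.)\<close>
definition chi' :: "nat \<Rightarrow> nat" where
  "chi' v = (LEAST k. \<exists>(X :: nat set) B. is_STS X B \<and> card X = v \<and> PPC_partition X B k)"

definition is_mcSTS :: "nat \<Rightarrow> 'a set \<Rightarrow> 'a set set \<Rightarrow> bool" where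
  "is_mcSTS v X B \<longleftrightarrow> is_STS X B \<and> card X = v \<and> PPC_partition X B (chi' v)"

definition is_SQS :: "nat \<Rightarrow> 'a set \<Rightarrow> 'a set set \<Rightarrow> bool" where
  "is_SQS v X A \<longleftrightarrow> finite X \<and> card X = v \<and> (\<forall>a\<in>A. a \<subseteq> X \<and> card a = 4) \<and>
     (\<forall>T. T \<subseteq> X \<and> card T = 3 \<longrightarrow> (\<exists>!a. a \<in> A \<and> T \<subseteq> a))"

definition derived :: "'a set set \<Rightarrow> 'a \<Rightarrow> 'a set set" where
  "derived A x = {a - {x} | a. a \<in> A \<and> x \<in> a}"

definition is_mcDSQS :: "nat \<Rightarrow> 'a set \<Rightarrow> 'a set set \<Rightarrow> bool" where
  "is_mcDSQS v X A \<longleftrightarrow> is_SQS v X A \<and> (\<forall>x\<in>X. is_mcSTS (v - 1) (X - {x}) (derived A x))"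

definition is_RDSQS :: "nat \<Rightarrow> 'a set \<Rightarrow> 'a set set \<Rightarrow> bool" where
  "is_RDSQS v X A \<longleftrightarrow> is_SQS v X A \<and> (\<forall>x\<in>X. resolvable (X - {x}) (derived A x))"

definition is_ISTS :: "nat \<Rightarrow> nat \<Rightarrow> 'a set \<Rightarrow> 'a set \<Rightarrow> 'a set set \<Rightarrow> bool" where
  "is_ISTS v h Y H B \<longleftrightarrow> finite Y \<and> card Y = v \<and> H \<subseteq> Y \<and> card H = h \<and>
     (\<forall>b\<in>B. b \<subseteq> Y \<and> card b = 3) \<and>
     (\<forall>x\<in>Y. \<forall>y\<in>Y. x \<noteq> y \<and> \<not> {x, y} \<subseteq> H \<longrightarrow> (\<exists>!b. b \<in> B \<and> {x, y} \<subseteq> b)) \<and>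
     (\<forall>x\<in>H. \<forall>y\<in>H. x \<noteq> y \<longrightarrow> \<not> (\<exists>b\<in>B. {x, y} \<subseteq> b))"

definition is_gcSTS :: "nat \<Rightarrow> nat \<Rightarrow> 'a set \<Rightarrow> 'a set \<Rightarrow> 'a set set \<Rightarrow> bool" where
  "is_gcSTS v h Y H B \<longleftrightarrow> is_ISTS v h Y H B \<and>
     (\<exists>f :: 'a set \<Rightarrow> nat. (\<forall>b\<in>B. f b < chi' v) \<and>
        (\<forall>i < chi' v. is_PPC Y {b\<in>B. f b = i}) \<and>
        (\<forall>i < chi' v - (v - h) div 2. is_PPC (Y - H) {b\<in>B. f b = i}))"

definition is_group_partition :: "nat \<Rightarrow> nat \<Rightarrow> 'a set \<Rightarrow> 'a set set \<Rightarrow> bool" where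
  "is_group_partition g n Z Gs \<longleftrightarrow> \<Union>Gs = Z \<and> pairwise disjnt Gs \<and> {} \<notin> Gs \<and>
     finite Gs \<and> card Gs = n \<and> (\<forall>G\<in>Gs. card G = g)"

definition is_GDD :: "nat \<Rightarrow> nat \<Rightarrow> 'a set \<Rightarrow> 'a set set \<Rightarrow> 'a set set \<Rightarrow> bool" where
  "is_GDD g n Z Gs B \<longleftrightarrow> finite Z \<and> is_group_partition g n Z Gs \<and>
     (\<forall>b\<in>B. b \<subseteq> Z \<and> card b = 3 \<and> (\<forall>G\<in>Gs. card (b \<inter> G) \<le> 1)) \<and>
     (\<forall>x\<in>Z. \<forall>y\<in>Z. x \<noteq> y \<and> \<not> (\<exists>G\<in>Gs. x \<in> G \<and> y \<in> G) \<longrightarrow> (\<exists>!b. b \<in> B \<and> {x, y} \<subseteq> b))"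

text \<open>Good colorable GDD with special group H: B is partitioned into the classes
  P G i (G a group, 1 <= i <= g/2, indexed here by i < g div 2), each a PPC of Z - G,
  and Pstar, a PPC of Z - H.\<close>
definition is_gcGDD :: "nat \<Rightarrow> nat \<Rightarrow> 'a set \<Rightarrow> 'a set set \<Rightarrow> 'a set set \<Rightarrow> 'a set \<Rightarrow> bool" where
  "is_gcGDD g n Z Gs B H \<longleftrightarrow> even g \<and> is_GDD g n Z Gs B \<and> H \<in> Gs \<and>
     (\<exists>(P :: 'a set \<Rightarrow> nat \<Rightarrow> 'a set set) Pstar.
        (\<forall>G\<in>Gs. \<forall>i < g div 2. P G i \<subseteq> B \<and> is_PPC (Z - G) (P G i)) \<and>
        Pstar \<subseteq> B \<and> is_PPC (Z - H) Pstar \<and>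
        B = (\<Union>G\<in>Gs. \<Union>i\<in>{..<g div 2}. P G i) \<union> Pstar \<and>
        (\<forall>G\<in>Gs. \<forall>i < g div 2. \<forall>G'\<in>Gs. \<forall>j < g div 2.
            (G, i) \<noteq> (G', j) \<longrightarrow> P G i \<inter> P G' j = {}) \<and>
        (\<forall>G\<in>Gs. \<forall>i < g div 2. P G i \<inter> Pstar = {}))"

definition is_CQS :: "nat \<Rightarrow> nat \<Rightarrow> nat \<Rightarrow> 'a set \<Rightarrow> 'a set \<Rightarrow> 'a set set \<Rightarrow> 'a set set \<Rightarrow> bool" where
  "is_CQS g n s X S Gs A \<longleftrightarrow> finite X \<and> S \<subseteq> X \<and> card S = s \<and>
     is_group_partition g n (X - S) Gs \<and>
     (\<forall>a\<in>A. a \<subseteq> X \<and> card a = 4) \<and>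
     (\<forall>T. T \<subseteq> X \<and> card T = 3 \<and> \<not> (\<exists>G\<in>Gs. T \<subseteq> S \<union> G) \<longrightarrow> (\<exists>!a. a \<in> A \<and> T \<subseteq> a)) \<and>
     (\<forall>T. T \<subseteq> X \<and> card T = 3 \<and> (\<exists>G\<in>Gs. T \<subseteq> S \<union> G) \<longrightarrow> \<not> (\<exists>a\<in>A. T \<subseteq> a))"

definition is_1cDCQS :: "nat \<Rightarrow> nat \<Rightarrow> 'a set \<Rightarrow> 'a set \<Rightarrow> 'a set set \<Rightarrow> 'a set set \<Rightarrow> bool" where
  "is_1cDCQS g n X S Gs A \<longleftrightarrow> even g \<and> is_CQS g n 2 X S Gs A \<and>
     (\<forall>G\<in>Gs. \<forall>x\<in>G. is_gcSTS (g * n + 1) (g + 1) (X - {x}) ((G \<union> S) - {x}) (derived A x)) \<and>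
     (\<exists>H\<in>Gs. \<forall>x\<in>S. is_gcGDD g n (X - S) Gs (derived A x) H)"

end

theory Submission
  imports Defs
begin


lemma is_PPC_subset: "is_PPC Y P \<Longrightarrow> Q \<subseteq> P \<Longrightarrow> is_PPC Y Q"
  unfolding is_PPC_def by (metis pairwise_subset subsetD)

lemma card3_finite: "card b = 3 \<Longrightarrow> finite b"
  by (intro card_ge_0_finite) simp

lemma is_PPC_mono: "is_PPC Y1 P \<Longrightarrow> Y1 \<subseteq> Y \<Longrightarrow> is_PPC Y P"
  by (auto simp: is_PPC_def)

lemma is_PPC_Un:
  assumes "is_PPC Y1 P1" "is_PPC Y2 P2" "Y1 \<inter> Y2 = {}" "Y1 \<union> Y2 \<subseteq> Y"
  shows "is_PPC Y (P1 \<union> P2)"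
proof -
  have s1: "\<forall>b\<in>P1. b \<subseteq> Y1" and p1: "pairwise disjnt P1"
   and s2: "\<forall>b\<in>P2. b \<subseteq> Y2" and p2: "pairwise disjnt P2" using assms(1,2) by (auto simp: is_PPC_def)
  have d: "disjnt x y" if "x \<subseteq> Y1" "y \<subseteq> Y2" for x y
    using that assms(3) by (auto simp: disjnt_def)
  show ?thesis unfolding is_PPC_def
  proof (intro conjI)
    show "\<forall>b\<in>P1 \<union> P2. b \<subseteq> Y" using s1 s2 assms(4) by blast
    show "pairwise disjnt (P1 \<union> P2)" unfolding pairwise_def
    proof (intro ballI impI)
      fix x y assume xy: "x \<in> P1 \<union> P2" "y \<in> P1 \<union> P2" "x \<noteq> y"
      show "disjnt x y"
      proof (cases "x \<in> P1")
        case True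
        show ?thesis
        proof (cases "y \<in> P1")
          case True
          then show ?thesis using p1 \<open>x \<in> P1\<close> xy(3) by (simp add: pairwise_def)
        next
          case False
          then show ?thesis using d s1 s2 \<open>x \<in> P1\<close> xy(2) by simp
        qed
      next
        case False
        hence x2: "x \<in> P2" using xy(1) by simp
        show ?thesis
        proof (cases "y \<in> P1")
          case True
          then show ?thesis using d s1 s2 x2 disjnt_sym by metis
        next
          case False
          then show ?thesis using p2 x2 xy(2,3) by (simp add: pairwise_def)
        qed
      qed
    qed
  qed
qed

lemma PPC_partition_cover:
  assumes "finite C" "card C \<le> k" "\<forall>P\<in>C. is_PPC Y P" "B \<subseteq> \<Union>C"
  shows "PPC_partition Y B k"
proof -
  obtain e where e: "bij_betw e {0..<card C} C" using ex_bij_betw_nat_finite[OF assms(1)] by blast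
  define f where "f b = (LEAST i. i < card C \<and> b \<in> e i)" for b
  have fb: "f b < card C \<and> b \<in> e (f b)" if "b \<in> B" for b
  proof -
    from that assms(4) obtain P where "P \<in> C" "b \<in> P" by blast
    hence "P \<in> e ` {0..<card C}" using e by (simp add: bij_betw_def)
    then obtain i where "i < card C" "e i = P" by auto
    hence "\<exists>i. i < card C \<and> b \<in> e i" using \<open>b\<in>P\<close> by blast
    thus ?thesis unfolding f_def by (rule LeastI_ex)
  qed
  show ?thesis unfolding PPC_partition_def
  proof (intro exI conjI allI impI ballI)
    fix b assume "b \<in> B" thus "f b < k" using fb assms(2) by fastforce
  next
    fix i assume "i < k"
    show "is_PPC Y {b \<in> B. f b = i}"
    proof (cases "i < card C")
      case True
      have "e i \<in> C" using e True by (auto simp: bij_betw_def)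
      hence "is_PPC Y (e i)" using assms(3) by blast
      moreover have "{b \<in> B. f b = i} \<subseteq> e i" using fb by auto
      ultimately show ?thesis by (rule is_PPC_subset)
    next
      case False
      hence e0: "{b \<in> B. f b = i} = {}" using fb by fastforce
      show ?thesis unfolding e0 by (simp add: is_PPC_def)
    qed
  qed
qed

lemma STS_finite_blocks: "is_STS X B \<Longrightarrow> finite B"
proof -
  assume a: "is_STS X B"
  hence "B \<subseteq> Pow X" "finite X" by (auto simp: is_STS_def)
  thus "finite B" by (meson finite_Pow_iff finite_subset)
qed

lemma STS_card_blocks:
  assumes "is_STS X B"
  shows "6 * card B = card X * (card X - 1)"
proof -
  have fin: "finite X" using assms by (simp add: is_STS_def)
  have blk: "\<forall>b\<in>B. b \<subseteq> X \<and> card b = 3" using assms by (simp add: is_STS_def)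
  have uq: "\<forall>x\<in>X. \<forall>y\<in>X. x \<noteq> y \<longrightarrow> (\<exists>!b. b \<in> B \<and> {x,y} \<subseteq> b)" using assms by (simp add: is_STS_def)
  have finB: "finite B" using STS_finite_blocks[OF assms] .
  define pr where "pr b = {p. p \<subseteq> b \<and> card p = 2}" for b :: "'a set"
  have U: "{p. p \<subseteq> X \<and> card p = 2} = (\<Union>b\<in>B. pr b)"
  proof
    show "{p. p \<subseteq> X \<and> card p = 2} \<subseteq> (\<Union>b\<in>B. pr b)"
    proof
      fix p assume "p \<in> {p. p \<subseteq> X \<and> card p = 2}"
      then obtain x y where "p = {x,y}" "x \<noteq> y" "x\<in>X" "y\<in>X" by (auto simp: card_2_iff)
      then obtain b where "b\<in>B" "{x,y} \<subseteq> b" using uq by blast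
      thus "p \<in> (\<Union>b\<in>B. pr b)" using \<open>p = {x,y}\<close> \<open>x\<noteq>y\<close> by (auto simp: pr_def)
    qed
  next
    show "(\<Union>b\<in>B. pr b) \<subseteq> {p. p \<subseteq> X \<and> card p = 2}" using blk by (auto simp: pr_def)
  qed
  have c3: "card (pr b) = 3" if "b \<in> B" for b
  proof -
    have "finite b" using blk that fin finite_subset by blast
    hence "card (pr b) = card b choose 2" unfolding pr_def by (rule n_subsets)
    thus ?thesis using blk that by (simp add: choose_two)
  qed
  have disj: "\<forall>b\<in>B. \<forall>b'\<in>B. b \<noteq> b' \<longrightarrow> pr b \<inter> pr b' = {}"
  proof (intro ballI impI)
    fix b b' assume "b\<in>B" "b'\<in>B" "b\<noteq>b'"
    show "pr b \<inter> pr b' = {}"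
    proof (rule ccontr)
      assume "pr b \<inter> pr b' \<noteq> {}"
      then obtain p where "p \<subseteq> b" "p \<subseteq> b'" "card p = 2" by (auto simp: pr_def)
      then obtain x y where p: "p = {x,y}" "x\<noteq>y" by (auto simp: card_2_iff)
      have "x \<in> X" "y \<in> X" using \<open>p \<subseteq> b\<close> \<open>b\<in>B\<close> blk p by auto
      then have "\<exists>!b. b \<in> B \<and> {x,y} \<subseteq> b" using uq p by blast
      then show False using \<open>b\<in>B\<close> \<open>b'\<in>B\<close> \<open>b\<noteq>b'\<close> \<open>p \<subseteq> b\<close> \<open>p \<subseteq> b'\<close> p by blast
    qed
  qed
  have finpr: "\<forall>b\<in>B. finite (pr b)"
  proof
    fix b assume "b \<in> B"
    hence "finite b" using blk fin finite_subset by blast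
    moreover have "pr b \<subseteq> Pow b" by (auto simp: pr_def)
    ultimately show "finite (pr b)" by (meson finite_Pow_iff finite_subset)
  qed
  have "card {p. p \<subseteq> X \<and> card p = 2} = card X choose 2" by (rule n_subsets[OF fin])
  moreover have "card (\<Union>b\<in>B. pr b) = (\<Sum>b\<in>B. card (pr b))"
    by (rule card_UN_disjoint[OF finB finpr disj])
  moreover have "(\<Sum>b\<in>B. card (pr b)) = 3 * card B" using c3 by simp
  ultimately have "3 * card B = card X * (card X - 1) div 2" using U by (simp add: choose_two)
  moreover have "even (card X * (card X - 1))" by (cases "even (card X)") auto
  hence "2 * (card X * (card X - 1) div 2) = card X * (card X - 1)" by (rule dvd_mult_div_cancel)
  ultimately show ?thesis by linarith
qed

lemma PC_card:
  assumes "is_STS W B" "is_PC W P" "P \<subseteq> B"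
  shows "3 * card P = card W"
proof -
  have fin: "finite W" using assms by (simp add: is_STS_def)
  have blk: "\<forall>b\<in>P. b \<subseteq> W \<and> card b = 3" using assms by (auto simp: is_STS_def)
  have "card (\<Union>P) = sum card P"
    by (rule card_Union_disjoint) (use assms(2) blk card3_finite in \<open>auto simp: is_PC_def is_PPC_def\<close>)
  moreover have "sum card P = 3 * card P" using blk by simp
  ultimately show ?thesis using assms(2) by (simp add: is_PC_def)
qed

lemma PPC_card_bound:
  assumes "is_STS X B" "is_PPC X P" "P \<subseteq> B" "card X mod 3 = 1"
  shows "3 * card P \<le> card X - 1"
proof -
  have fin: "finite X" using assms by (simp add: is_STS_def)
  have blk: "\<forall>b\<in>P. b \<subseteq> X \<and> card b = 3" using assms by (auto simp: is_STS_def)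
  have "card (\<Union>P) = sum card P"
    by (rule card_Union_disjoint) (use assms(2) blk card3_finite in \<open>auto simp: is_PPC_def\<close>)
  moreover have "sum card P = 3 * card P" using blk by simp
  moreover have "card (\<Union>P) \<le> card X" using blk fin by (intro card_mono) auto
  ultimately have "3 * card P \<le> card X" by simp
  thus ?thesis using assms(4) by presburger
qed

lemma chi_lower:
  assumes "is_STS X B" "PPC_partition X B k" "card X mod 3 = 1" "odd (card X)" "card X > 1"
  shows "card X + 1 \<le> 2 * k"
proof -
  obtain f where f: "\<forall>b\<in>B. f b < k" "\<forall>i<k. is_PPC X {b\<in>B. f b = i}"
    using assms(2) by (auto simp: PPC_partition_def)
  define Q where "Q i = {b\<in>B. f b = i}" for i
  have finB: "finite B" using STS_finite_blocks[OF assms(1)] .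
  have "B = (\<Union>i\<in>{..<k}. Q i)" using f by (auto simp: Q_def)
  moreover have "\<forall>i\<in>{..<k}. finite (Q i)" using finB by (auto simp: Q_def)
  moreover have "\<forall>i\<in>{..<k}. \<forall>j\<in>{..<k}. i \<noteq> j \<longrightarrow> Q i \<inter> Q j = {}" by (auto simp: Q_def)
  ultimately have "card B = (\<Sum>i\<in>{..<k}. card (Q i))"
    using card_UN_disjoint[of "{..<k}" Q] by simp
  hence "3 * card B = (\<Sum>i\<in>{..<k}. 3 * card (Q i))" by (simp add: sum_distrib_left)
  also have "\<dots> \<le> card {..<k} * (card X - 1)"
    using sum_bounded_above[of "{..<k}" "\<lambda>i. 3 * card (Q i)" "card X - 1"]
      PPC_card_bound[OF assms(1) _ _ assms(3)] f(2) by (auto simp: Q_def)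
  finally have "3 * card B \<le> k * (card X - 1)" by simp
  hence "6 * card B \<le> (2 * k) * (card X - 1)" by simp
  hence "card X * (card X - 1) \<le> (2 * k) * (card X - 1)" using STS_card_blocks[OF assms(1)] by simp
  hence "card X \<le> 2 * k" using assms(5) mult_le_cancel2[of "card X" "card X - 1" "2 * k"] by simp
  thus ?thesis using assms(4) by presburger
qed

lemma resolvable_card:
  assumes "is_STS W B" "\<forall>P\<in>R. is_PC W P" "\<Union>R = B" "pairwise disjnt R" "card W > 0"
  shows "2 * card R = card W - 1"
proof -
  have finB: "finite B" using STS_finite_blocks[OF assms(1)] .
  have finR: "\<forall>P\<in>R. finite P" using assms(3) finB by (metis Union_upper finite_subset)
  have "card B = sum card R"
    using card_Union_disjoint[OF assms(4)] assms(3) finR by metis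
  hence "3 * card B = (\<Sum>P\<in>R. 3 * card P)" by (simp add: sum_distrib_left)
  also have "\<dots> = (\<Sum>P\<in>R. card W)"
    using PC_card[OF assms(1)] assms(2,3) by (intro sum.cong) blast+
  also have "\<dots> = card R * card W" by simp
  finally have "3 * card B = card R * card W" .
  hence "6 * card B = card W * (2 * card R)" by simp
  hence "card W * (2 * card R) = card W * (card W - 1)" using STS_card_blocks[OF assms(1)] by linarith
  thus ?thesis using assms(5) by (metis mult_left_cancel not_gr0)
qed



lemma derived_STS:
  assumes "is_SQS v X A" "x \<in> X"
  shows "is_STS (X - {x}) (derived A x)"
proof -
  have fin: "finite X" and blk: "\<forall>a\<in>A. a \<subseteq> X \<and> card a = 4"
    and tr: "\<forall>T. T \<subseteq> X \<and> card T = 3 \<longrightarrow> (\<exists>!a. a \<in> A \<and> T \<subseteq> a)"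
    using assms(1) by (auto simp: is_SQS_def)
  show ?thesis unfolding is_STS_def
  proof (intro conjI)
    show "finite (X - {x})" using fin by simp
    show "\<forall>b\<in>derived A x. b \<subseteq> X - {x} \<and> card b = 3"
    proof
    fix b assume "b \<in> derived A x"
    then obtain a where a: "b = a - {x}" "a \<in> A" "x \<in> a" by (auto simp: derived_def)
    have "finite a" using blk a(2) fin finite_subset by blast
    thus "b \<subseteq> X - {x} \<and> card b = 3" using blk a by auto
    qed
  next
   show "\<forall>y\<in>X - {x}. \<forall>z\<in>X - {x}. y \<noteq> z \<longrightarrow> (\<exists>!b. b \<in> derived A x \<and> {y, z} \<subseteq> b)"
   proof (intro ballI impI)
    fix y z assume y: "y \<in> X - {x}" and z: "z \<in> X - {x}" and yz: "y \<noteq> z"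
    have "card {x,y,z} = 3" using y z yz by auto
    moreover have "{x,y,z} \<subseteq> X" using y z assms(2) by auto
    ultimately obtain a where a: "a \<in> A" "{x,y,z} \<subseteq> a"
      and u: "\<And>a'. a' \<in> A \<Longrightarrow> {x,y,z} \<subseteq> a' \<Longrightarrow> a' = a" using tr by metis
    show "\<exists>!b. b \<in> derived A x \<and> {y, z} \<subseteq> b"
    proof (rule ex1I[of _ "a - {x}"])
      show "a - {x} \<in> derived A x \<and> {y, z} \<subseteq> a - {x}" using a y z by (auto simp: derived_def)
    next
      fix b assume "b \<in> derived A x \<and> {y, z} \<subseteq> b"
      then obtain a' where "b = a' - {x}" "a' \<in> A" "x \<in> a'" "{y,z} \<subseteq> b" by (auto simp: derived_def)
      moreover hence "a' = a" using u by auto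
      ultimately show "b = a - {x}" by simp
    qed
   qed
  qed
qed

lemma RDSQS_transport:
  assumes "is_RDSQS v Y A" "bij_betw h Y Z"
  shows "is_RDSQS v Z ((`) h ` A)"
proof -
  have SQ: "is_SQS v Y A" and res: "\<forall>y\<in>Y. resolvable (Y - {y}) (derived A y)"
    using assms(1) by (auto simp: is_RDSQS_def)
  have fin: "finite Y" and cY: "card Y = v" and blk: "\<forall>a\<in>A. a \<subseteq> Y \<and> card a = 4"
    and tr: "\<forall>T. T \<subseteq> Y \<and> card T = 3 \<longrightarrow> (\<exists>!a. a \<in> A \<and> T \<subseteq> a)"
    using SQ by (auto simp: is_SQS_def)
  have inj: "inj_on h Y" and im: "h ` Y = Z" using assms(2) by (auto simp: bij_betw_def)
  define h' where "h' = inv_into Y h"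
  have ii: "inj_on h' Z" unfolding h'_def using im inj_on_inv_into by blast
  have h'Z: "h' ` Z \<subseteq> Y" unfolding h'_def using im by (auto intro: inv_into_into)
  have canc1: "h ` (h' ` T) = T" if "T \<subseteq> Z" for T
    unfolding h'_def using image_inv_into_cancel[OF im that] .
  have canc2: "h' ` (h ` T) = T" if "T \<subseteq> Y" for T
    unfolding h'_def using inv_into_image_cancel[OF inj that] .
  have SQ': "is_SQS v Z ((`) h ` A)" unfolding is_SQS_def
  proof (intro conjI)
    show "finite Z" using fin im finite_imageI by metis
    show "card Z = v" using cY bij_betw_same_card[OF assms(2)] by simp
    show "\<forall>a'\<in>(`) h ` A. a' \<subseteq> Z \<and> card a' = 4"
    proof
    fix a' assume "a' \<in> (`) h ` A"
    then obtain a where a: "a \<in> A" "a' = h ` a" by (rule imageE)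
    have "inj_on h a" using inj blk a(1) inj_on_subset by blast
    hence "card (h ` a) = card a" by (rule card_image)
    thus "a' \<subseteq> Z \<and> card a' = 4" using a blk im by auto
    qed
  next
   show "\<forall>T. T \<subseteq> Z \<and> card T = 3 \<longrightarrow> (\<exists>!a'. a' \<in> (`) h ` A \<and> T \<subseteq> a')"
   proof (intro allI impI)
    fix T assume T: "T \<subseteq> Z \<and> card T = 3"
    have T'1: "h' ` T \<subseteq> Y" using T h'Z by blast
    have "inj_on h' T" using ii T inj_on_subset by blast
    hence "card (h' ` T) = card T" by (rule card_image)
    hence T'2: "card (h' ` T) = 3" using T by simp
    have "\<exists>!a. a \<in> A \<and> h' ` T \<subseteq> a" using tr[rule_format, of "h' ` T"] T'1 T'2 by simp
    then obtain a where a: "a \<in> A" "h' ` T \<subseteq> a" and u: "\<And>b. b \<in> A \<Longrightarrow> h' ` T \<subseteq> b \<Longrightarrow> b = a"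
      by (metis (no_types, lifting))
    show "\<exists>!a'. a' \<in> (`) h ` A \<and> T \<subseteq> a'"
    proof (rule ex1I[of _ "h ` a"])
      have "T = h ` (h' ` T)" using canc1 T by metis
      also have "\<dots> \<subseteq> h ` a" using a(2) by (rule image_mono)
      finally show "h ` a \<in> (`) h ` A \<and> T \<subseteq> h ` a" using a(1) by (simp add: imageI)
    next
      fix b' assume "b' \<in> (`) h ` A \<and> T \<subseteq> b'"
      then obtain b where b: "b \<in> A" "b' = h ` b" "T \<subseteq> h ` b" by blast
      have "h' ` T \<subseteq> h' ` (h ` b)" using b(3) by (rule image_mono)
      also have "\<dots> = b" using canc2 blk b(1) by metis
      finally have "b = a" using u b(1) by metis
      thus "b' = h ` a" using b by simp
    qed
   qed
  qed
  have der: "derived ((`) h ` A) (h y) = (`) h ` derived A y" if y: "y \<in> Y" for y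
  proof
    show "derived ((`) h ` A) (h y) \<subseteq> (`) h ` derived A y"
    proof
      fix b assume "b \<in> derived ((`) h ` A) (h y)"
      then obtain a where a: "a \<in> A" "h y \<in> h ` a" "b = h ` a - {h y}" by (auto simp: derived_def)
      have ay: "y \<in> a" using a(2) inj blk a(1) y by (meson inj_on_image_mem_iff)
      have "a \<subseteq> Y" using blk a(1) by simp
      hence "h ` (a - {y}) = h ` a - h ` {y}" using y by (intro inj_on_image_set_diff[OF inj]) auto
      hence "b = h ` (a - {y})" using a(3) by simp
      thus "b \<in> (`) h ` derived A y" using a(1) ay by (auto simp: derived_def)
    qed
  next
    show "(`) h ` derived A y \<subseteq> derived ((`) h ` A) (h y)"
    proof
      fix b assume "b \<in> (`) h ` derived A y"
      then obtain a where a: "a \<in> A" "y \<in> a" "b = h ` (a - {y})" by (auto simp: derived_def)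
      have "a \<subseteq> Y" using blk a(1) by simp
      hence "h ` (a - {y}) = h ` a - h ` {y}" using y by (intro inj_on_image_set_diff[OF inj]) auto
      hence "b = h ` a - {h y}" using a(3) by simp
      thus "b \<in> derived ((`) h ` A) (h y)" using a by (auto simp: derived_def)
    qed
  qed
  have "resolvable (Z - {z}) (derived ((`) h ` A) z)" if z: "z \<in> Z" for z
  proof -
    obtain y where y: "y \<in> Y" "z = h y" using z im by blast
    obtain R where R: "\<forall>P\<in>R. is_PC (Y - {y}) P" "\<Union>R = derived A y" "pairwise disjnt R"
      using res y(1) by (auto simp: resolvable_def)
    have Rsub: "\<forall>P\<in>R. \<forall>b\<in>P. b \<subseteq> Y - {y}" using R(1) by (auto simp: is_PC_def is_PPC_def)
    have "h ` (Y - {y}) = h ` Y - h ` {y}" using y by (intro inj_on_image_set_diff[OF inj]) auto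
    hence Zy: "Z - {z} = h ` (Y - {y})" using y im by simp
    define R' where "R' = (\<lambda>P. (`) h ` P) ` R"
    show ?thesis unfolding resolvable_def
    proof (intro exI[of _ R'] conjI ballI)
      fix P' assume "P' \<in> R'"
      then obtain P where P: "P \<in> R" "P' = (`) h ` P" unfolding R'_def by blast
      have PC: "\<forall>b\<in>P. b \<subseteq> Y - {y}" "pairwise disjnt P" "\<Union>P = Y - {y}"
        using R(1) P(1) by (auto simp: is_PC_def is_PPC_def)
      show "is_PC (Z - {z}) P'" unfolding is_PC_def is_PPC_def
      proof (intro conjI ballI)
        fix b' assume "b' \<in> P'" then show "b' \<subseteq> Z - {z}" using P PC(1) Zy by auto
      next
        show "pairwise disjnt P'" unfolding pairwise_def
        proof (intro ballI impI)
          fix b1' b2' assume "b1' \<in> P'" "b2' \<in> P'" "b1' \<noteq> b2'"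
          then obtain b1 b2 where "b1 \<in> P" "b2 \<in> P" "b1' = h ` b1" "b2' = h ` b2" "b1 \<noteq> b2"
            using P by blast
          hence "disjnt b1 b2" "b1 \<subseteq> Y" "b2 \<subseteq> Y" using PC by (auto simp: pairwise_def)
          hence dd: "disjnt b1 b2" "b1 \<subseteq> Y" "b2 \<subseteq> Y" by auto
          show "disjnt b1' b2'" unfolding disjnt_def
          proof (rule ccontr)
            assume "b1' \<inter> b2' \<noteq> {}"
            then obtain u where "u \<in> h ` b1" "u \<in> h ` b2" using \<open>b1' = h ` b1\<close> \<open>b2' = h ` b2\<close> by auto
            then obtain x1 x2 where x: "x1 \<in> b1" "x2 \<in> b2" "h x1 = h x2" by auto
            hence "x1 = x2" using inj dd(2,3) by (meson inj_onD subsetD)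
            thus False using x dd(1) by (auto simp: disjnt_def)
          qed
        qed
      next
        show "\<Union>P' = Z - {z}" using P PC(3) Zy by auto
      qed
    next
      have "derived ((`) h ` A) z = (`) h ` (\<Union>R)" using R(2) der y by simp
      also have "\<dots> = \<Union>R'" unfolding R'_def by (simp add: image_Union)
      finally show "\<Union>R' = derived ((`) h ` A) z" by simp
    next
      show "pairwise disjnt R'" unfolding pairwise_def
      proof (intro ballI impI)
        fix P1' P2' assume "P1' \<in> R'" "P2' \<in> R'" "P1' \<noteq> P2'"
        then obtain P1 P2 where P: "P1 \<in> R" "P2 \<in> R" "P1' = (`) h ` P1" "P2' = (`) h ` P2" "P1 \<noteq> P2"
          unfolding R'_def by blast
        hence dj: "disjnt P1 P2" using R(3) by (auto simp: pairwise_def)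
        show "disjnt P1' P2'" unfolding disjnt_def
        proof (rule ccontr)
          assume "P1' \<inter> P2' \<noteq> {}"
          then obtain b1 b2 where "b1 \<in> P1" "b2 \<in> P2" "h ` b1 = h ` b2" using P by blast
          moreover have "b1 \<subseteq> Y" "b2 \<subseteq> Y" using Rsub P \<open>b1 \<in> P1\<close> \<open>b2 \<in> P2\<close> by auto
          ultimately have "b1 = b2" using inj by (metis inj_on_image_eq_iff)
          thus False using dj \<open>b1 \<in> P1\<close> \<open>b2 \<in> P2\<close> by (auto simp: disjnt_def)
        qed
      qed
    qed
  qed
  thus ?thesis using SQ' by (simp add: is_RDSQS_def)
qed



lemma derived_Un: "derived (A \<union> B) x = derived A x \<union> derived B x"
  by (auto simp: derived_def)

lemma derived_UN: "derived (\<Union>G\<in>I. F G) x = (\<Union>G\<in>I. derived (F G) x)"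
  by (auto simp: derived_def)

lemma derived_empty_if: "\<forall>a\<in>A. a \<subseteq> W \<Longrightarrow> x \<notin> W \<Longrightarrow> derived A x = {}"
  by (auto simp: derived_def)

theorem mainTheorem15:
  fixes g n :: nat
  assumes "n mod 3 = 0"
    and "\<exists>(X :: nat set) S Gs A. is_1cDCQS g n X S Gs A"
    and "\<exists>(Y :: nat set) A'. is_RDSQS (g + 2) Y A'"
  shows "\<exists>(X :: nat set) A. is_mcDSQS (g * n + 2) X A"
proof -
  obtain X :: "nat set" and S Gs A where D: "is_1cDCQS g n X S Gs A" using assms(2) by blast
  obtain Y :: "nat set" and A' where RD: "is_RDSQS (g + 2) Y A'" using assms(3) by blast
  note d1 = D[unfolded is_1cDCQS_def]
  have evg: "even g" using d1 by (elim conjE) assumption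
  have CQS: "is_CQS g n 2 X S Gs A" using d1 by (elim conjE) assumption
  have gcS: "\<forall>G\<in>Gs. \<forall>x\<in>G. is_gcSTS (g*n+1) (g+1) (X - {x}) ((G \<union> S) - {x}) (derived A x)"
    using d1 by (elim conjE) assumption
  have gcG: "\<exists>H\<in>Gs. \<forall>x\<in>S. is_gcGDD g n (X - S) Gs (derived A x) H"
    using d1 by (elim conjE) assumption
  note cq = CQS[unfolded is_CQS_def]
  have finX: "finite X" using cq by (elim conjE) assumption
  have SX: "S \<subseteq> X" using cq by (elim conjE) assumption
  have cS: "card S = 2" using cq by (elim conjE) assumption
  have GP: "is_group_partition g n (X - S) Gs" using cq by (elim conjE) assumption
  have blA: "\<forall>a\<in>A. a \<subseteq> X \<and> card a = 4" using cq by (elim conjE) assumption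
  have tr1: "\<forall>T. T \<subseteq> X \<and> card T = 3 \<and> \<not> (\<exists>G\<in>Gs. T \<subseteq> S \<union> G) \<longrightarrow> (\<exists>!a. a \<in> A \<and> T \<subseteq> a)"
    using cq by (elim conjE) assumption
  have tr2: "\<forall>T. T \<subseteq> X \<and> card T = 3 \<and> (\<exists>G\<in>Gs. T \<subseteq> S \<union> G) \<longrightarrow> \<not> (\<exists>a\<in>A. T \<subseteq> a)"
    using cq by (elim conjE) assumption
  note gp = GP[unfolded is_group_partition_def]
  have UGs: "\<Union>Gs = X - S" using gp by (elim conjE) assumption
  have disjG: "pairwise disjnt Gs" using gp by (elim conjE) assumption
  have nemp: "{} \<notin> Gs" using gp by (elim conjE) assumption
  have finGs: "finite Gs" using gp by (elim conjE) assumption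
  have cardGs: "card Gs = n" using gp by (elim conjE) assumption
  have cG: "\<forall>G\<in>Gs. card G = g" using gp by (elim conjE) assumption
  obtain H where HG: "H \<in> Gs" and gcGH: "\<forall>x\<in>S. is_gcGDD g n (X - S) Gs (derived A x) H"
    using gcG by blast
  have GsubX: "G \<subseteq> X - S" if "G \<in> Gs" for G using UGs that by blast
  have finG: "finite G" if "G \<in> Gs" for G using GsubX[OF that] finX finite_subset by blast
  have Gdisj: "G \<inter> G' = {}" if "G \<in> Gs" "G' \<in> Gs" "G \<noteq> G'" for G G'
    using disjG that by (auto simp: pairwise_def disjnt_def)
  have gpos: "g > 0"
  proof -
    have "H \<noteq> {}" using nemp HG by auto
    hence "card H > 0" using finG[OF HG] by (simp add: card_gt_0_iff)
    thus ?thesis using cG HG by simp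
  qed
  have "Gs \<noteq> {}" using HG by (simp add: ex_in_conv[symmetric]) (rule exI)
  hence "card Gs > 0" using finGs by (simp add: card_gt_0_iff)
  hence npos: "n > 0" using cardGs by simp
  obtain q where q: "g = 2 * q" using evg by (rule evenE)
  have qpos: "q > 0" using gpos q by simp
  have cXS: "card (X - S) = n * g"
  proof -
    have "card (\<Union>Gs) = sum card Gs" by (rule card_Union_disjoint[OF disjG]) (use finG in auto)
    also have "\<dots> = sum (\<lambda>_. g) Gs" using cG by (intro sum.cong) auto
    also have "\<dots> = n * g" using cardGs by simp
    finally show ?thesis using UGs by simp
  qed
  have cX: "card X = g * n + 2"
  proof -
    have fS: "finite S" using finX SX finite_subset by blast
    have "card (X - S) = card X - card S" using card_Diff_subset[OF fS SX] .
    moreover have "card S \<le> card X" using card_mono[OF finX SX] .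
    ultimately have "card X = card S + card (X - S)" by simp
    thus ?thesis using cS cXS by simp
  qed
  have SGcard: "card (S \<union> G) = g + 2" if "G \<in> Gs" for G
  proof -
    have "S \<inter> G = {}" using GsubX[OF that] by blast
    moreover have "finite S" using finX SX finite_subset by blast
    ultimately have "card (S \<union> G) = card S + card G" using finG[OF that] by (simp add: card_Un_disjoint)
    thus ?thesis using cS cG that by simp
  qed
  have "is_SQS (g+2) Y A'" using RD[unfolded is_RDSQS_def] by (elim conjE) assumption
  note sy = this[unfolded is_SQS_def]
  have finY: "finite Y" using sy by (elim conjE) assumption
  have cY: "card Y = g + 2" using sy by (elim conjE) assumption
  have "\<forall>G\<in>Gs. \<exists>h. bij_betw h Y (S \<union> G)"
  proof
    fix G assume "G \<in> Gs"
    have "finite (S \<union> G)" using finX SX GsubX[OF \<open>G \<in> Gs\<close>] finite_subset by blast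
    thus "\<exists>h. bij_betw h Y (S \<union> G)" using finY cY SGcard[OF \<open>G \<in> Gs\<close>]
      by (intro finite_same_card_bij) auto
  qed
  then obtain \<phi> where \<phi>: "\<forall>G\<in>Gs. bij_betw (\<phi> G) Y (S \<union> G)" by metis
  define C where "C G = (`) (\<phi> G) ` A'" for G
  have RC: "is_RDSQS (g+2) (S \<union> G) (C G)" if "G \<in> Gs" for G
    unfolding C_def using RDSQS_transport[OF RD, of "\<phi> G" "S \<union> G"] \<phi> that by simp
  have SC: "is_SQS (g+2) (S \<union> G) (C G)" if "G \<in> Gs" for G
    using RC[OF that, unfolded is_RDSQS_def] by (elim conjE) assumption
  have blC: "\<forall>a\<in>C G. a \<subseteq> S \<union> G \<and> card a = 4" if "G \<in> Gs" for G
    using SC[OF that, unfolded is_SQS_def] by (elim conjE) assumption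
  define At where "At = A \<union> (\<Union>G\<in>Gs. C G)"
  have SQS: "is_SQS (g*n+2) X At" unfolding is_SQS_def
  proof (intro conjI)
    show "finite X" by (rule finX)
    show "card X = g*n+2" by (rule cX)
    show "\<forall>a\<in>At. a \<subseteq> X \<and> card a = 4"
    proof
      fix a assume "a \<in> At"
      hence "a \<in> A \<or> (\<exists>G\<in>Gs. a \<in> C G)" unfolding At_def by blast
      thus "a \<subseteq> X \<and> card a = 4"
      proof
        assume "a \<in> A" thus ?thesis using blA by blast
      next
        assume "\<exists>G\<in>Gs. a \<in> C G"
        then obtain G where G: "G\<in>Gs" "a \<in> C G" by blast
        have "a \<subseteq> S \<union> G" "card a = 4" using blC[OF G(1)] G(2) by auto
        moreover have "S \<union> G \<subseteq> X" using SX GsubX[OF G(1)] by blast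
        ultimately show ?thesis by blast
      qed
    qed
    show "\<forall>T. T \<subseteq> X \<and> card T = 3 \<longrightarrow> (\<exists>!a. a \<in> At \<and> T \<subseteq> a)"
    proof (intro allI impI)
      fix T assume T: "T \<subseteq> X \<and> card T = 3"
      show "\<exists>!a. a \<in> At \<and> T \<subseteq> a"
      proof (cases "\<exists>G\<in>Gs. T \<subseteq> S \<union> G")
        case True
        then obtain G where G: "G \<in> Gs" "T \<subseteq> S \<union> G" by blast
        have trC: "\<forall>T. T \<subseteq> S \<union> G \<and> card T = 3 \<longrightarrow> (\<exists>!a. a \<in> C G \<and> T \<subseteq> a)"
          using SC[OF G(1), unfolded is_SQS_def] by (elim conjE) assumption
        have "\<exists>!a. a \<in> C G \<and> T \<subseteq> a" using trC[rule_format, of T] G(2) T by simp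
        then obtain a where a: "a \<in> C G" "T \<subseteq> a" and u: "\<And>b. b \<in> C G \<Longrightarrow> T \<subseteq> b \<Longrightarrow> b = a"
          by metis
        have noA: "\<not> (\<exists>a\<in>A. T \<subseteq> a)" using tr2[rule_format, of T] T True by simp
        show ?thesis
        proof (rule ex1I[of _ a])
          show "a \<in> At \<and> T \<subseteq> a" using a G(1) unfolding At_def by blast
        next
          fix b assume b: "b \<in> At \<and> T \<subseteq> b"
          hence "b \<in> A \<or> (\<exists>G'\<in>Gs. b \<in> C G')" unfolding At_def by blast
          thus "b = a"
          proof
            assume "b \<in> A" thus ?thesis using noA b by blast
          next
            assume "\<exists>G'\<in>Gs. b \<in> C G'"
            then obtain G' where G': "G' \<in> Gs" "b \<in> C G'" by blast
            show ?thesis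
            proof (cases "G' = G")
              case True thus ?thesis using u G' b by blast
            next
              case False
              have "b \<subseteq> S \<union> G'" using blC[OF G'(1)] G'(2) by blast
              hence "T \<subseteq> (S \<union> G) \<inter> (S \<union> G')" using b G(2) by blast
              also have "\<dots> \<subseteq> S" using Gdisj[OF G(1) G'(1)] False by blast
              finally have "card T \<le> card S" using finX SX by (meson card_mono finite_subset)
              thus ?thesis using T cS by simp
            qed
          qed
        qed
      next
        case False
        have "\<exists>!a. a \<in> A \<and> T \<subseteq> a" using tr1[rule_format, of T] T False by simp
        then obtain a where a: "a \<in> A" "T \<subseteq> a" and u: "\<And>b. b \<in> A \<Longrightarrow> T \<subseteq> b \<Longrightarrow> b = a"
          by metis
        show ?thesis
        proof (rule ex1I[of _ a])
          show "a \<in> At \<and> T \<subseteq> a" using a unfolding At_def by blast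
        next
          fix b assume b: "b \<in> At \<and> T \<subseteq> b"
          hence "b \<in> A \<or> (\<exists>G'\<in>Gs. b \<in> C G')" unfolding At_def by blast
          thus "b = a"
          proof
            assume "b \<in> A" thus ?thesis using u b by blast
          next
            assume "\<exists>G'\<in>Gs. b \<in> C G'"
            then obtain G' where G': "G' \<in> Gs" "b \<in> C G'" by blast
            have "b \<subseteq> S \<union> G'" using blC[OF G'(1)] G'(2) by blast
            hence "T \<subseteq> S \<union> G'" using b by blast
            thus ?thesis using False G'(1) by blast
          qed
        qed
      qed
    qed
  qed
  have derAt: "derived At x = derived A x \<union> (\<Union>G\<in>Gs. derived (C G) x)" for x
    unfolding At_def derived_Un derived_UN ..
  have STSx: "is_STS (X - {x}) (derived At x)" if "x \<in> X" for x using derived_STS[OF SQS that] .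
  have cXx: "card (X - {x}) = g*n+1" if "x \<in> X" for x using cX finX that by simp
  have resX: "resolvable ((S \<union> G) - {x}) (derived (C G) x)" if "G \<in> Gs" "x \<in> S \<union> G" for G x
  proof -
    have "\<forall>z\<in>S \<union> G. resolvable ((S \<union> G) - {z}) (derived (C G) z)"
      using RC[OF that(1), unfolded is_RDSQS_def] by (elim conjE) assumption
    thus ?thesis using that(2) by blast
  qed
  have Rcard: "2 * card R = g" if G: "G \<in> Gs" and x: "x \<in> S \<union> G"
    and R: "\<forall>P\<in>R. is_PC ((S \<union> G) - {x}) P" "\<Union>R = derived (C G) x" "pairwise disjnt R" for G x R
  proof -
    have fin: "finite (S \<union> G)" using finX SX GsubX[OF G] finite_subset by blast
    have c: "card ((S \<union> G) - {x}) = g + 1" using SGcard[OF G] x fin by simp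
    have "2 * card R = card ((S \<union> G) - {x}) - 1"
      by (rule resolvable_card[OF derived_STS[OF SC[OF G] x] R]) (use c in simp)
    thus ?thesis using c by simp
  qed
  have Rbij: "\<exists>\<rho>. bij_betw \<rho> {0..<q} R" if G: "G \<in> Gs" and x: "x \<in> S \<union> G"
    and R: "\<forall>P\<in>R. is_PC ((S \<union> G) - {x}) P" "\<Union>R = derived (C G) x" "pairwise disjnt R" for G x R
  proof -
    have "card R = q" using Rcard[OF G x R] q by simp
    hence "finite R" using qpos card_gt_0_iff by (metis)
    thus ?thesis using ex_bij_betw_nat_finite[of R] \<open>card R = q\<close> by simp
  qed
  define K where "K = n*q+1"
  have partS: "PPC_partition (X - {x}) (derived At x) K" if xS: "x \<in> S" for x
  proof -
    have gg: "is_gcGDD g n (X - S) Gs (derived A x) H" using gcGH xS by blast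
    have "\<exists>P Pstar.
        (\<forall>G\<in>Gs. \<forall>i < g div 2. P G i \<subseteq> derived A x \<and> is_PPC (X - S - G) (P G i)) \<and>
        Pstar \<subseteq> derived A x \<and> is_PPC (X - S - H) Pstar \<and>
        derived A x = (\<Union>G\<in>Gs. \<Union>i\<in>{..<g div 2}. P G i) \<union> Pstar \<and>
        (\<forall>G\<in>Gs. \<forall>i < g div 2. \<forall>G'\<in>Gs. \<forall>j < g div 2.
            (G, i) \<noteq> (G', j) \<longrightarrow> P G i \<inter> P G' j = {}) \<and>
        (\<forall>G\<in>Gs. \<forall>i < g div 2. P G i \<inter> Pstar = {})"
      using gg[unfolded is_gcGDD_def] by (elim conjE) assumption
    then obtain P Pstar where
        P1: "\<forall>G\<in>Gs. \<forall>i < g div 2. P G i \<subseteq> derived A x \<and> is_PPC (X - S - G) (P G i)"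
      and Ps: "is_PPC (X - S - H) Pstar"
      and Beq: "derived A x = (\<Union>G\<in>Gs. \<Union>i\<in>{..<g div 2}. P G i) \<union> Pstar"
      by (elim exE conjE) 
    have "\<forall>G\<in>Gs. \<exists>R. (\<forall>P\<in>R. is_PC ((S \<union> G) - {x}) P) \<and> \<Union>R = derived (C G) x \<and> pairwise disjnt R"
    proof
      fix G assume "G \<in> Gs"
      hence "resolvable ((S \<union> G) - {x}) (derived (C G) x)" using resX xS by blast
      thus "\<exists>R. (\<forall>P\<in>R. is_PC ((S \<union> G) - {x}) P) \<and> \<Union>R = derived (C G) x \<and> pairwise disjnt R"
        unfolding resolvable_def .
    qed
    then obtain R where R: "\<forall>G\<in>Gs. (\<forall>P\<in>R G. is_PC ((S \<union> G) - {x}) P) \<and> \<Union>(R G) = derived (C G) x \<and> pairwise disjnt (R G)"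
      by metis
    have "\<forall>G\<in>Gs. \<exists>\<rho>. bij_betw \<rho> {0..<q} (R G)"
    proof
      fix G assume G: "G \<in> Gs"
      have x: "x \<in> S \<union> G" using xS by blast
      show "\<exists>\<rho>. bij_betw \<rho> {0..<q} (R G)"
        by (rule Rbij[OF G x]) (use R G in blast)+
    qed
    then obtain \<rho> where \<rho>: "\<forall>G\<in>Gs. bij_betw (\<rho> G) {0..<q} (R G)" by metis
    define CC where "CC = (\<lambda>(G,i). P G i \<union> \<rho> G i) ` (Gs \<times> {0..<q}) \<union> {Pstar}"
    show ?thesis
    proof (rule PPC_partition_cover[of CC])
      show "finite CC" unfolding CC_def using finGs by simp
      have "card CC \<le> card ((\<lambda>(G,i). P G i \<union> \<rho> G i) ` (Gs \<times> {0..<q})) + card {Pstar}"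
        unfolding CC_def by (rule card_Un_le)
      also have "\<dots> \<le> card (Gs \<times> {0..<q}) + 1" using card_image_le[of "Gs \<times> {0..<q}"] finGs by simp
      also have "\<dots> = K" unfolding K_def using cardGs by (simp add: card_cartesian_product)
      finally show "card CC \<le> K" .
      show "\<forall>P'\<in>CC. is_PPC (X - {x}) P'"
      proof
        fix P' assume "P' \<in> CC"
        hence "P' = Pstar \<or> (\<exists>G i. G \<in> Gs \<and> i < q \<and> P' = P G i \<union> \<rho> G i)" unfolding CC_def by fastforce
        thus "is_PPC (X - {x}) P'"
        proof
          assume "P' = Pstar" thus ?thesis using Ps xS by (auto intro: is_PPC_mono)
        next
          assume "\<exists>G i. G \<in> Gs \<and> i < q \<and> P' = P G i \<union> \<rho> G i"
          then obtain G i where Gi: "G \<in> Gs" "i < q" "P' = P G i \<union> \<rho> G i" by blast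
          have a1: "is_PPC (X - S - G) (P G i)" using P1 Gi q by simp
          have "\<rho> G i \<in> \<rho> G ` {0..<q}" using Gi(2) by simp
          moreover have "\<rho> G ` {0..<q} = R G" using \<rho> Gi(1) by (simp add: bij_betw_def)
          ultimately have "\<rho> G i \<in> R G" by simp
          hence "is_PC ((S \<union> G) - {x}) (\<rho> G i)" using R Gi(1) by blast
          hence a2: "is_PPC ((S \<union> G) - {x}) (\<rho> G i)" by (simp add: is_PC_def)
          have "is_PPC (X - {x}) (P G i \<union> \<rho> G i)"
            by (rule is_PPC_Un[OF a1 a2]) (use xS SX GsubX[OF Gi(1)] in auto)
          thus ?thesis using Gi by simp
        qed
      qed
      show "derived At x \<subseteq> \<Union>CC"
      proof
        fix b assume "b \<in> derived At x"
        hence "b \<in> derived A x \<or> (\<exists>G\<in>Gs. b \<in> derived (C G) x)" unfolding derAt by blast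
        thus "b \<in> \<Union>CC"
        proof
          assume "b \<in> derived A x"
          hence "b \<in> Pstar \<or> (\<exists>G\<in>Gs. \<exists>i<q. b \<in> P G i)" unfolding Beq using q by auto
          thus ?thesis
          proof
            assume "b \<in> Pstar" thus ?thesis unfolding CC_def by blast
          next
            assume "\<exists>G\<in>Gs. \<exists>i<q. b \<in> P G i"
            then obtain G i where "G \<in> Gs" "i < q" "b \<in> P G i" by blast
            thus ?thesis unfolding CC_def by force
          qed
        next
          assume "\<exists>G\<in>Gs. b \<in> derived (C G) x"
          then obtain G where G: "G \<in> Gs" "b \<in> derived (C G) x" by blast
          hence "b \<in> \<Union>(R G)" using R by metis
          also have "R G = \<rho> G ` {0..<q}" using \<rho> G(1) by (simp add: bij_betw_def)
          finally obtain i where "i < q" "b \<in> \<rho> G i" by auto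
          thus ?thesis unfolding CC_def using G(1) by force
        qed
      qed
    qed
  qed
  have chi: "chi' (g*n+1) = K"
  proof -
    obtain s where sS: "s \<in> S" using cS by (metis card.empty ex_in_conv zero_neq_numeral)
    have sX: "s \<in> X" using sS SX by blast
    have Pex: "\<exists>(X' :: nat set) B. is_STS X' B \<and> card X' = g*n+1 \<and> PPC_partition X' B K"
      using STSx[OF sX] cXx[OF sX] partS[OF sS] by blast
    have le: "chi' (g*n+1) \<le> K" unfolding chi'_def by (rule Least_le) (rule Pex)
    have "\<exists>(X' :: nat set) B. is_STS X' B \<and> card X' = g*n+1 \<and> PPC_partition X' B (chi' (g*n+1))"
      unfolding chi'_def by (rule LeastI_ex) (use Pex in blast)
    then obtain X' :: "nat set" and B where XB: "is_STS X' B" "card X' = g*n+1" "PPC_partition X' B (chi' (g*n+1))"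
      by blast
    have "3 dvd n" using assms(1) by presburger
    hence "3 dvd g*n" by simp
    hence m3: "card X' mod 3 = 1" using XB(2) by presburger
    have "even (g*n)" using evg by simp
    hence od: "odd (card X')" using XB(2) by simp
    have "g*n > 0" using gpos npos by simp
    hence gt: "card X' > 1" using XB(2) by simp
    have h1: "card X' + 1 \<le> 2 * chi' (g*n+1)" by (rule chi_lower[OF XB(1) XB(3) m3 od gt])
    have "g*n = 2*(n*q)" using q by simp
    hence h2: "card X' + 1 = 2 * K" unfolding K_def using XB(2) by simp
    have "K \<le> chi' (g*n+1)" using h1 h2 by linarith
    thus ?thesis using le by simp
  qed
  have partG: "PPC_partition (X - {x}) (derived At x) K" if G0: "G0 \<in> Gs" and xG: "x \<in> G0" for G0 x
  proof -
    have gc: "is_gcSTS (g*n+1) (g+1) (X - {x}) ((G0 \<union> S) - {x}) (derived A x)" using gcS G0 xG by blast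
    have "\<exists>f :: nat set \<Rightarrow> nat. (\<forall>b\<in>derived A x. f b < chi' (g*n+1)) \<and>
        (\<forall>i < chi' (g*n+1). is_PPC (X - {x}) {b\<in>derived A x. f b = i}) \<and>
        (\<forall>i < chi' (g*n+1) - (g*n+1 - (g+1)) div 2. is_PPC ((X - {x}) - ((G0 \<union> S) - {x})) {b\<in>derived A x. f b = i})"
      using gc[unfolded is_gcSTS_def] by (elim conjE) assumption
    then obtain f :: "nat set \<Rightarrow> nat" where
      f1: "\<forall>b\<in>derived A x. f b < K"
      and f2: "\<forall>i < K. is_PPC (X - {x}) {b\<in>derived A x. f b = i}"
      and f3: "\<forall>i < K - (g*n+1 - (g+1)) div 2. is_PPC ((X - {x}) - ((G0 \<union> S) - {x})) {b\<in>derived A x. f b = i}"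
      unfolding chi by (elim exE conjE)
    obtain m where m: "m = q*n" by blast
    have e1: "g*n = 2*m" using q m by simp
    have qm: "q \<le> m" using m npos by simp
    have "g*n+1 - (g+1) = 2*m - 2*q" using e1 q by simp
    hence "(g*n+1 - (g+1)) div 2 = m - q" by simp
    moreover have "K = m + 1" unfolding K_def m by simp
    ultimately have Kq: "K - (g*n+1 - (g+1)) div 2 = q + 1" using qm by simp
    have f3': "\<forall>i<q. is_PPC ((X - {x}) - ((G0 \<union> S) - {x})) {b\<in>derived A x. f b = i}"
      using f3 unfolding Kq by simp
    have x: "x \<in> S \<union> G0" using xG by blast
    obtain R where R: "\<forall>P\<in>R. is_PC ((S \<union> G0) - {x}) P" "\<Union>R = derived (C G0) x" "pairwise disjnt R"
      using resX[OF G0 x] unfolding resolvable_def by blast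
    obtain \<rho> where \<rho>: "bij_betw \<rho> {0..<q} R" using Rbij[OF G0 x R] by blast
    have "q \<le> n * q" using npos by simp
    hence qK: "q \<le> K" unfolding K_def by linarith
    define CC where "CC = (\<lambda>i. {b\<in>derived A x. f b = i} \<union> (if i < q then \<rho> i else {})) ` {0..<K}"
    show ?thesis
    proof (rule PPC_partition_cover[of CC])
      show "finite CC" unfolding CC_def by simp
      show "card CC \<le> K" unfolding CC_def using card_image_le[of "{0..<K}"] by simp
      show "\<forall>P'\<in>CC. is_PPC (X - {x}) P'"
      proof
        fix P' assume "P' \<in> CC"
        then obtain i where i1: "P' = {b\<in>derived A x. f b = i} \<union> (if i < q then \<rho> i else {})" and i2: "i \<in> {0..<K}"
          unfolding CC_def by (rule imageE)
        have i: "i < K" "P' = {b\<in>derived A x. f b = i} \<union> (if i < q then \<rho> i else {})"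
          using i1 i2 by simp_all
        show "is_PPC (X - {x}) P'"
        proof (cases "i < q")
          case True
          have a1: "is_PPC ((X - {x}) - ((G0 \<union> S) - {x})) {b\<in>derived A x. f b = i}" using f3' True by simp
          have "\<rho> i \<in> \<rho> ` {0..<q}" using True by simp
          hence "\<rho> i \<in> R" using \<rho> by (simp add: bij_betw_def)
          hence "is_PC ((S \<union> G0) - {x}) (\<rho> i)" using R(1) by blast
          hence a2: "is_PPC ((S \<union> G0) - {x}) (\<rho> i)" by (simp add: is_PC_def)
          have "is_PPC (X - {x}) ({b\<in>derived A x. f b = i} \<union> \<rho> i)"
            by (rule is_PPC_Un[OF a1 a2]) (use SX GsubX[OF G0] in auto)
          thus ?thesis using i True by simp
        next
          case False
          thus ?thesis using i f2 by simp
        qed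
      qed
      show "derived At x \<subseteq> \<Union>CC"
      proof
        fix b assume "b \<in> derived At x"
        hence "b \<in> derived A x \<or> (\<exists>G\<in>Gs. b \<in> derived (C G) x)" unfolding derAt by blast
        thus "b \<in> \<Union>CC"
        proof
          assume b: "b \<in> derived A x"
          hence "f b < K" using f1 by blast
          hence "{b'\<in>derived A x. f b' = f b} \<union> (if f b < q then \<rho> (f b) else {}) \<in> CC"
            unfolding CC_def by simp
          moreover have "b \<in> {b'\<in>derived A x. f b' = f b} \<union> (if f b < q then \<rho> (f b) else {})"
            using b by simp
          ultimately show ?thesis by (rule UnionI)
        next
          assume "\<exists>G\<in>Gs. b \<in> derived (C G) x"
          then obtain G where G: "G \<in> Gs" "b \<in> derived (C G) x" by blast
          have "G = G0"
          proof (rule ccontr)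
            assume "G \<noteq> G0"
            hence "x \<notin> S \<union> G" using Gdisj[OF G(1) G0] xG GsubX[OF G0] by blast
            have "\<forall>a\<in>C G. a \<subseteq> S \<union> G" using blC[OF G(1)] by blast
            hence "derived (C G) x = {}" using \<open>x \<notin> S \<union> G\<close> by (rule derived_empty_if)
            thus False using G(2) by simp
          qed
          hence "b \<in> \<Union>R" using G(2) R(2) by simp
          also have "R = \<rho> ` {0..<q}" using \<rho> by (simp add: bij_betw_def)
          finally obtain i where i: "i < q" "b \<in> \<rho> i" by auto
          hence "i < K" using qK by simp
          hence "{b'\<in>derived A x. f b' = i} \<union> (if i < q then \<rho> i else {}) \<in> CC"
            unfolding CC_def by simp
          moreover have "b \<in> {b'\<in>derived A x. f b' = i} \<union> (if i < q then \<rho> i else {})"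
            using i by simp
          ultimately show ?thesis by (rule UnionI)
        qed
      qed
    qed
  qed
  show ?thesis
  proof (intro exI[of _ X] exI[of _ At])
    show "is_mcDSQS (g*n+2) X At" unfolding is_mcDSQS_def is_mcSTS_def
    proof (intro conjI ballI)
      show "is_SQS (g*n+2) X At" by (rule SQS)
    next
      fix x assume "x \<in> X" thus "is_STS (X - {x}) (derived At x)" by (rule STSx)
    next
      fix x assume "x \<in> X" thus "card (X - {x}) = g*n+2-1" using cXx by simp
    next
      fix x assume xX: "x \<in> X"
      have "PPC_partition (X - {x}) (derived At x) K"
      proof (cases "x \<in> S")
        case True thus ?thesis by (rule partS)
      next
        case False
        hence "x \<in> \<Union>Gs" using xX UGs by blast
        then obtain G0 where "G0 \<in> Gs" "x \<in> G0" by blast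
        thus ?thesis by (rule partG)
      qed
      thus "PPC_partition (X - {x}) (derived At x) (chi' (g*n+2-1))" using chi by simp
    qed
  qed
qed


end
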